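(* Let $N\ge 1$ and $m\ge 1$ be integers and let \[ \mathcal A=\begin{bmatrix} \hat A_H & e_m\otimes B_H & 0\\ e_m^{T}\otimes C & A & e_1^{T}\otimes B\\ 0 & e_1\otimes C_h & \hat A_h\end{bmatrix}\in\mathbb R^{N(2m+1)\times N(2m+1)}, \] where $\hat A_H,\hat A_h\in\mathbb R^{Nm\times Nm}$, $A,B,C,B_H,C_h\in\mathbb R^{N\times N}$, and $e_1,e_m$ are the first and last canonical basis vectors of $\mathbb R^m$. Suppose the matrices \[ A_1=\begin{bmatrix}\hat A_H & e_m\otimes B_H\\ e_m^{T}\otimes C & A\end{bmatrix},\qquad A_2=\begin{bmatrix} A & e_1^{T}\otimes B\\ e_1\otimes C_h & \hat A_h\end{bmatrix}\in\mathbb R^{N(m+1)\times N(m+1)} \] are nonsingular, and let $T_{12}$, $T_{21}$, $P^{(i)}$, $\Pi^{(i)}$, $P^{(i)}_j$ be as defined in the context. Define \[ V_1=\begin{bmatrix} -P^{(1)}\\ \Pi^{(2)}P^{(1)}_m\\ P^{(2)}P^{(1)}_m\end{bmatrix},\qquad V_2=\begin{bmatrix} P^{(1)}P^{(2)}_1\\ \Pi^{(1)}P^{(2)}_1\\ -P^{(2)}\end{bmatrix}\in\mathbb R^{N(2m+1)\times N}, \] and let $f_m,f_{m+2}$ denote the $m$-th and $(m+2)$-th canonical basis vectors of $\mathbb R^{2m+1}$. Then $\mathrm{rank}(T_{12})\le N$, $\mathrm{rank}(T_{21})\le N$, and for all $k\ge 0$, \[ T_{12}^{k+1}=V_1\bigl(P^{(2)}_1P^{(1)}_m\bigr)^{k}(f_{m+2}^{T}\otimes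 I_N),\qquad T_{21}^{k+1}=V_2\bigl(P^{(1)}_mP^{(2)}_1\bigr)^{k}(f_{m}^{T}\otimes I_N). \]
   Context: Restriction operators: $R_1=[I_{N(m+1)}\;\,0]$ and $R_2=[0\;\,I_{N(m+1)}]$, both in $\mathbb R^{N(m+1)\times N(2m+1)}$; note $A_i=R_i\mathcal A R_i^{T}$. Projections $P_i=R_i^{T}A_i^{-1}R_i\mathcal A$, $Q_i=I-P_i$ ($i=1,2$), and the multiplicative Schwarz iteration matrices $T_{12}=Q_2Q_1$, $T_{21}=Q_1Q_2$. With $\hat e_1,\hat e_{m+1}$ the first and last canonical basis vectors of $\mathbb R^{m+1}$, define $\Pi^{(1)},\Pi^{(2)}\in\mathbb R^{N\times N}$ and $P^{(1)},P^{(2)}\in\mathbb R^{Nm\times N}$ by $\begin{bmatrix}P^{(1)}\\ \Pi^{(1)}\end{bmatrix}=A_1^{-1}(\hat e_{m+1}\otimes B)$ and $\begin{bmatrix}\Pi^{(2)}\\ P^{(2)}\end{bmatrix}=A_2^{-1}(\hat e_{1}\otimes C)$, and partition $P^{(i)}=[(P^{(i)}_1)^{T},\dots,(P^{(i)}_m)^{T}]^{T}$ with $P^{(i)}_j\in\mathbb R^{N\times N}$. $\otimes$ denotes the Kronecker product. *)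

theory Defs
  imports "Jordan_Normal_Form.Matrix" "Jordan_Normal_Form.DL_Rank"
begin

definition kron_mat :: "'a :: times mat \<Rightarrow> 'a mat \<Rightarrow> 'a mat" where
  "kron_mat A B = mat (dim_row A * dim_row B) (dim_col A * dim_col B)
     (\<lambda>(i,j). A $$ (i div dim_row B, j div dim_col B) * B $$ (i mod dim_row B, j mod dim_col B))"

text \<open>k-th canonical basis vector of R^n as an n x 1 column matrix (1-based index k).\<close>
definition unit_col :: "nat \<Rightarrow> nat \<Rightarrow> 'a :: {zero,one} mat" where
  "unit_col n k = mat n 1 (\<lambda>(i,j). if i = k - 1 then 1 else 0)"

definition append_cols_mat :: "'a :: zero mat \<Rightarrow> 'a mat \<Rightarrow> 'a mat" where
  "append_cols_mat A B = four_block_mat A B (0\<^sub>m 0 (dim_col A)) (0\<^sub>m 0 (dim_col B))"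

definition block3_mat :: "'a :: zero mat \<Rightarrow> 'a mat \<Rightarrow> 'a mat \<Rightarrow> 'a mat \<Rightarrow> 'a mat \<Rightarrow> 'a mat
    \<Rightarrow> 'a mat \<Rightarrow> 'a mat \<Rightarrow> 'a mat \<Rightarrow> 'a mat" where
  "block3_mat A11 A12 A13 A21 A22 A23 A31 A32 A33 =
     four_block_mat (four_block_mat A11 A12 A21 A22) (A13 @\<^sub>r A23)
                    (append_cols_mat A31 A32) A33"

definition sub_block :: "'a mat \<Rightarrow> nat \<Rightarrow> nat \<Rightarrow> nat \<Rightarrow> nat \<Rightarrow> 'a mat" where
  "sub_block M r0 c0 nr nc = mat nr nc (\<lambda>(i,j). M $$ (i + r0, j + c0))"

definition inv_mat :: "'a :: semiring_1 mat \<Rightarrow> 'a mat" where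
  "inv_mat A = (SOME B. B \<in> carrier_mat (dim_row A) (dim_row A) \<and> inverts_mat A B \<and> inverts_mat B A)"

definition mat_rank :: "'a :: field mat \<Rightarrow> nat" where
  "mat_rank M = vec_space.rank (dim_row M) M"

end

theory Submission imports Defs begin

lemma ifmul1: "(if P then (1::'a::comm_ring_1) else 0) * x = (if P then x else 0)" by simp
lemma ifmul2: "x * (if P then (1::'a::comm_ring_1) else 0) = (if P then x else 0)" by simp

lemma sel_left:
  fixes M :: "'a::comm_ring_1 mat"
  assumes M: "M \<in> carrier_mat c d"
  shows "mat r c (\<lambda>(i,k). if k = g i \<and> P i then 1 else 0) * M
       = mat r d (\<lambda>(i,j). if P i \<and> g i < c then M $$ (g i, j) else 0)"
  using M by (intro eq_matI) (auto simp: scalar_prod_def ifmul1 ifmul2)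

lemma sel_right:
  fixes M :: "'a::comm_ring_1 mat"
  assumes M: "M \<in> carrier_mat r c"
  shows "M * mat c d (\<lambda>(k,j). if k = g j \<and> P j then 1 else 0)
       = mat r d (\<lambda>(i,j). if P j \<and> g j < c then M $$ (i, g j) else 0)"
  using M by (intro eq_matI) (auto simp: scalar_prod_def ifmul1 ifmul2)

lemma rowsel_mult:
  fixes M :: "'a::comm_ring_1 mat"
  assumes M: "M \<in> carrier_mat r c" and Q: "Q \<in> carrier_mat c d"
    and g: "\<And>i. i < r' \<Longrightarrow> P i \<Longrightarrow> g i < r"
  shows "mat r' c (\<lambda>(i,k). if P i then M $$ (g i, k) else 0) * Q
       = mat r' d (\<lambda>(i,j). if P i then (M * Q) $$ (g i, j) else 0)"
proof -
  let ?S = "mat r' r (\<lambda>(i,k). if k = g i \<and> P i then 1 else 0) :: 'a mat"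
  have "?S * M = mat r' c (\<lambda>(i,j). if P i \<and> g i < r then M $$ (g i, j) else 0)"
    by (rule sel_left[OF M])
  also have "\<dots> = mat r' c (\<lambda>(i,k). if P i then M $$ (g i, k) else 0)"
    using g by (intro eq_matI) auto
  finally have L: "mat r' c (\<lambda>(i,k). if P i then M $$ (g i, k) else 0) = ?S * M" ..
  have S: "?S \<in> carrier_mat r' r" by auto
  have "?S * M * Q = ?S * (M * Q)" using assoc_mult_mat[OF S M Q] .
  also have "\<dots> = mat r' d (\<lambda>(i,j). if P i \<and> g i < r then (M * Q) $$ (g i, j) else 0)"
    by (rule sel_left) (use M Q in auto)
  also have "\<dots> = mat r' d (\<lambda>(i,j). if P i then (M * Q) $$ (g i, j) else 0)"
    using g by (intro eq_matI) auto
  finally show ?thesis unfolding L .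
qed

lemma div_block:
  assumes "(N::nat) > 0"
  shows "(i div N = q) = (N*q \<le> i \<and> i < N*q + N)"
proof
  assume q: "i div N = q"
  have "N * (i div N) + i mod N = i" by simp
  moreover have "i mod N < N" using assms by simp
  ultimately show "N*q \<le> i \<and> i < N*q + N" using q by (metis le_add1 nat_add_left_cancel_less)
next
  assume "N*q \<le> i \<and> i < N*q + N"
  then show "i div N = q" by (intro div_nat_eqI) auto
qed

lemma mod_block:
  assumes "(N::nat) > 0" "N*q \<le> i" "i < N*q + N"
  shows "i mod N = i - N*q"
proof -
  have "i div N = q" using div_block[OF assms(1)] assms by blast
  moreover have "N * (i div N) + i mod N = i" by simp
  ultimately show ?thesis by (metis add_diff_cancel_left')
qed

lemma kron_col_entry:
  fixes M :: "'a::{comm_ring_1} mat"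
  assumes M: "M \<in> carrier_mat N N" and N: "N > 0" and k: "1 \<le> k"
  shows "kron_mat (unit_col p k) M = mat (N*p) N (\<lambda>(i,j). if N*(k-1) \<le> i \<and> i < N*(k-1) + N then M $$ (i - N*(k-1), j) else 0)"
proof (rule eq_matI)
  fix i j assume i: "i < dim_row (mat (N*p) N (\<lambda>(i,j). if N*(k-1) \<le> i \<and> i < N*(k-1) + N then M $$ (i - N*(k-1), j) else 0))"
    and j: "j < dim_col (mat (N*p) N (\<lambda>(i,j). if N*(k-1) \<le> i \<and> i < N*(k-1) + N then M $$ (i - N*(k-1), j) else 0) :: 'a mat)"
  have i': "i div N < p" using i N by (simp add: less_mult_imp_div_less mult.commute)
  have "i < p*N" "j div N = 0" "j mod N = j" using i j by (auto simp: mult.commute)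
  then show "kron_mat (unit_col p k) M $$ (i, j) = mat (N*p) N (\<lambda>(i,j). if N*(k-1) \<le> i \<and> i < N*(k-1) + N then M $$ (i - N*(k-1), j) else 0) $$ (i, j)"
    using i j M N i' mod_block[OF N, of "k-1" i] div_block[OF N, of i "k-1"]
    by (auto simp: kron_mat_def unit_col_def)
qed (use M in \<open>auto simp: kron_mat_def unit_col_def\<close>)

lemma kron_row_entry:
  fixes M :: "'a::{comm_ring_1} mat"
  assumes M: "M \<in> carrier_mat N N" and N: "N > 0" and k: "1 \<le> k"
  shows "kron_mat (transpose_mat (unit_col p k)) M = mat N (N*p) (\<lambda>(i,j). if N*(k-1) \<le> j \<and> j < N*(k-1) + N then M $$ (i, j - N*(k-1)) else 0)"
proof (rule eq_matI)
  fix i j assume i: "i < dim_row (mat N (N*p) (\<lambda>(i,j). if N*(k-1) \<le> j \<and> j < N*(k-1) + N then M $$ (i, j - N*(k-1)) else 0) :: 'a mat)"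
    and j: "j < dim_col (mat N (N*p) (\<lambda>(i,j). if N*(k-1) \<le> j \<and> j < N*(k-1) + N then M $$ (i, j - N*(k-1)) else 0) :: 'a mat)"
  have j': "j div N < p" using j N by (simp add: less_mult_imp_div_less mult.commute)
  have "j < p*N" "i div N = 0" "i mod N = i" using i j by (auto simp: mult.commute)
  then show "kron_mat (transpose_mat (unit_col p k)) M $$ (i, j) = mat N (N*p) (\<lambda>(i,j). if N*(k-1) \<le> j \<and> j < N*(k-1) + N then M $$ (i, j - N*(k-1)) else 0) $$ (i, j)"
    using i j M N j' mod_block[OF N, of "k-1" j] div_block[OF N, of j "k-1"]
    by (auto simp: kron_mat_def unit_col_def)
qed (use M in \<open>auto simp: kron_mat_def unit_col_def\<close>)

lemma rank_partial:
  fixes V F :: "real mat"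
  assumes V: "V \<in> carrier_mat n N" and F: "F \<in> carrier_mat N c"
  shows "p \<le> N \<Longrightarrow> vec_space.rank n (mat n c (\<lambda>(i,j). \<Sum>l<p. V $$ (i,l) * F $$ (l,j))) \<le> p"
proof (induction p)
  case 0
  have "mat n c (\<lambda>(i,j). \<Sum>l<0. V $$ (i,l) * F $$ (l,j)) = (0\<^sub>m n c :: real mat)"
    by (rule eq_matI) auto
  then show ?case using vec_space.rank_0I by (metis le_zero_eq)
next
  case (Suc p)
  let ?M = "mat n c (\<lambda>(i,j). \<Sum>l<p. V $$ (i,l) * F $$ (l,j))"
  let ?O = "mat n c (\<lambda>(i,j). V $$ (i,p) * F $$ (p,j)) :: real mat"
  have eq: "mat n c (\<lambda>(i,j). \<Sum>l<Suc p. V $$ (i,l) * F $$ (l,j)) = ?M + ?O"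
    by (rule eq_matI) auto
  have "vec_space.rank n ?O \<le> 1"
    by (rule vec_space.rank_le_1_product_entries[where f="\<lambda>i. V $$ (i,p)" and g="\<lambda>j. F $$ (p,j)" and nc=c]) auto
  moreover have "vec_space.rank n (?M + ?O) \<le> vec_space.rank n ?M + vec_space.rank n ?O"
    by (rule vec_space.rank_subadditive) auto
  ultimately show ?case using Suc unfolding eq by linarith
qed

lemma rank_prod_le:
  fixes V F :: "real mat"
  assumes V: "V \<in> carrier_mat n N" and F: "F \<in> carrier_mat N c"
  shows "mat_rank (V * F) \<le> N"
proof -
  have "V * F = mat n c (\<lambda>(i,j). \<Sum>l<N. V $$ (i,l) * F $$ (l,j))"
    using V F by (intro eq_matI) (auto simp: scalar_prod_def lessThan_atLeast0 intro!: sum.cong)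
  then show ?thesis using rank_partial[OF V F, of N] V unfolding mat_rank_def by simp
qed
lemma pow_VF:
  fixes V F :: "real mat"
  assumes V: "V \<in> carrier_mat n N" and F: "F \<in> carrier_mat N n"
  shows "(V*F) ^\<^sub>m (Suc k) = V * (F*V) ^\<^sub>m k * F"
proof (induction k)
  case 0
  then show ?case using V F by simp
next
  case (Suc k)
  define P where "P = (F*V) ^\<^sub>m k"
  have P: "P \<in> carrier_mat N N" unfolding P_def using V F by auto
  have VP: "V * P \<in> carrier_mat n N" using V P by auto
  have "(V*F) ^\<^sub>m (Suc (Suc k)) = V * P * F * (V * F)" using Suc unfolding P_def by simp
  also have "\<dots> = V * P * (F * (V * F))" using assoc_mult_mat[OF VP F mult_carrier_mat[OF V F]] .
  also have "F * (V * F) = F * V * F" using assoc_mult_mat[OF F V F] by simp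
  also have "V * P * (F * V * F) = V * P * (F * V) * F"
    using assoc_mult_mat[OF VP mult_carrier_mat[OF F V] F] by simp
  also have "V * P * (F * V) = V * (P * (F * V))" using assoc_mult_mat[OF V P mult_carrier_mat[OF F V]] .
  also have "P * (F * V) = (F*V) ^\<^sub>m (Suc k)" unfolding P_def by simp
  finally show ?case .
qed
theorem lemma3p1:
  fixes N m :: nat
    and AhatH Ahath A B C BH Ch :: "real mat"
    and calA A1 A2 R1 R2 P1proj P2proj Q1 Q2 T12 T21 :: "real mat"
    and X1 X2 PP1 PP2 Pi1 Pi2 V1 V2 :: "real mat"
    and PP :: "nat \<Rightarrow> nat \<Rightarrow> real mat"
  assumes N: "N \<ge> 1" and m: "m \<ge> 1"
    and dAH: "AhatH \<in> carrier_mat (N*m) (N*m)" and dAh: "Ahath \<in> carrier_mat (N*m) (N*m)"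
    and dA: "A \<in> carrier_mat N N" and dB: "B \<in> carrier_mat N N" and dC: "C \<in> carrier_mat N N"
    and dBH: "BH \<in> carrier_mat N N" and dCh: "Ch \<in> carrier_mat N N"
  defines "calA \<equiv> block3_mat
       AhatH (kron_mat (unit_col m m) BH) (0\<^sub>m (N*m) (N*m))
       (kron_mat (transpose_mat (unit_col m m)) C) A (kron_mat (transpose_mat (unit_col m 1)) B)
       (0\<^sub>m (N*m) (N*m)) (kron_mat (unit_col m 1) Ch) Ahath"
    and "A1 \<equiv> four_block_mat AhatH (kron_mat (unit_col m m) BH)
                 (kron_mat (transpose_mat (unit_col m m)) C) A"
    and "A2 \<equiv> four_block_mat A (kron_mat (transpose_mat (unit_col m 1)) B)
                 (kron_mat (unit_col m 1) Ch) Ahath"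
    and "R1 \<equiv> append_cols_mat (1\<^sub>m (N*(m+1))) (0\<^sub>m (N*(m+1)) (N*m))"
    and "R2 \<equiv> append_cols_mat (0\<^sub>m (N*(m+1)) (N*m)) (1\<^sub>m (N*(m+1)))"
    and "P1proj \<equiv> transpose_mat R1 * inv_mat A1 * R1 * calA"
    and "P2proj \<equiv> transpose_mat R2 * inv_mat A2 * R2 * calA"
    and "Q1 \<equiv> 1\<^sub>m (N*(2*m+1)) - P1proj"
    and "Q2 \<equiv> 1\<^sub>m (N*(2*m+1)) - P2proj"
    and "T12 \<equiv> Q2 * Q1"
    and "T21 \<equiv> Q1 * Q2"
    and "X1 \<equiv> inv_mat A1 * kron_mat (unit_col (m+1) (m+1)) B"
    and "X2 \<equiv> inv_mat A2 * kron_mat (unit_col (m+1) 1) C"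
    and "PP1 \<equiv> sub_block X1 0 0 (N*m) N"
    and "Pi1 \<equiv> sub_block X1 (N*m) 0 N N"
    and "Pi2 \<equiv> sub_block X2 0 0 N N"
    and "PP2 \<equiv> sub_block X2 N 0 (N*m) N"
    and "PP \<equiv> (\<lambda>i j. sub_block (if i = 1 then PP1 else PP2) (N*(j-1)) 0 N N)"
    and "V1 \<equiv> (- PP1) @\<^sub>r (Pi2 * PP 1 m) @\<^sub>r (PP2 * PP 1 m)"
    and "V2 \<equiv> (PP1 * PP 2 1) @\<^sub>r (Pi1 * PP 2 1) @\<^sub>r (- PP2)"
  assumes inv1: "invertible_mat A1" and inv2: "invertible_mat A2"
  shows "mat_rank T12 \<le> N \<and> mat_rank T21 \<le> N \<and>
    (\<forall>k::nat.
      T12 ^\<^sub>m (k+1) = V1 * (PP 2 1 * PP 1 m) ^\<^sub>m k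
                          * kron_mat (transpose_mat (unit_col (2*m+1) (m+2))) (1\<^sub>m N) \<and>
      T21 ^\<^sub>m (k+1) = V2 * (PP 1 m * PP 2 1) ^\<^sub>m k
                          * kron_mat (transpose_mat (unit_col (2*m+1) m)) (1\<^sub>m N))"
proof -
  have N0: "N > 0" using N by simp
  have ar1: "N*(m+1) = N*m + N" by (simp add: algebra_simps)
  have ar2: "N*(2*m+1) = N*m + N + N*m" by (simp add: algebra_simps)
  have ar3: "N*(m-1) + N = N*m" using m by (cases m) (auto simp: algebra_simps)
  have ar4: "m + 1 - 1 = m" "m + 2 - 1 = m + 1" "(1::nat) - 1 = 0" by auto
  have kCh: "kron_mat (unit_col m 1) Ch = mat (N*m) N (\<lambda>(i,j). if i < N then Ch $$ (i,j) else 0)"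
  proof -
    have "kron_mat (unit_col m 1) Ch = mat (N*(m)) N (\<lambda>(i,j). if N*(1-1) \<le> i \<and> i < N*(1-1) + N then Ch $$ (i - N*(1-1), j) else 0)"
      by (rule kron_col_entry) (use N0 m dA dB dC dBH dCh in auto)
    also have "\<dots> = mat (N*m) N (\<lambda>(i,j). if i < N then Ch $$ (i,j) else 0)"
      unfolding ar4 by (intro eq_matI) auto
    finally show ?thesis .
  qed
  have kB: "kron_mat (transpose_mat (unit_col m 1)) B = mat N (N*m) (\<lambda>(i,j). if j < N then B $$ (i,j) else 0)"
  proof -
    have "kron_mat (transpose_mat (unit_col m 1)) B = mat N (N*(m)) (\<lambda>(i,j). if N*(1-1) \<le> j \<and> j < N*(1-1) + N then B $$ (i, j - N*(1-1)) else 0)"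
      by (rule kron_row_entry) (use N0 m dA dB dC dBH dCh in auto)
    also have "\<dots> = mat N (N*m) (\<lambda>(i,j). if j < N then B $$ (i,j) else 0)"
      unfolding ar4 by (intro eq_matI) auto
    finally show ?thesis .
  qed
  have kBH: "kron_mat (unit_col m m) BH = mat (N*m) N (\<lambda>(i,j). if N*(m-1) \<le> i then BH $$ (i - N*(m-1),j) else 0)"
  proof -
    have "kron_mat (unit_col m m) BH = mat (N*(m)) N (\<lambda>(i,j). if N*(m-1) \<le> i \<and> i < N*(m-1) + N then BH $$ (i - N*(m-1), j) else 0)"
      by (rule kron_col_entry) (use N0 m dA dB dC dBH dCh in auto)
    also have "\<dots> = mat (N*m) N (\<lambda>(i,j). if N*(m-1) \<le> i then BH $$ (i - N*(m-1),j) else 0)"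
      unfolding ar3 by (intro eq_matI) auto
    finally show ?thesis .
  qed
  have kC: "kron_mat (transpose_mat (unit_col m m)) C = mat N (N*m) (\<lambda>(i,j). if N*(m-1) \<le> j then C $$ (i,j - N*(m-1)) else 0)"
  proof -
    have "kron_mat (transpose_mat (unit_col m m)) C = mat N (N*(m)) (\<lambda>(i,j). if N*(m-1) \<le> j \<and> j < N*(m-1) + N then C $$ (i, j - N*(m-1)) else 0)"
      by (rule kron_row_entry) (use N0 m dA dB dC dBH dCh in auto)
    also have "\<dots> = mat N (N*m) (\<lambda>(i,j). if N*(m-1) \<le> j then C $$ (i,j - N*(m-1)) else 0)"
      unfolding ar3 by (intro eq_matI) auto
    finally show ?thesis .
  qed
  have kb: "kron_mat (unit_col (m+1) (m+1)) B = mat (N*m+N) N (\<lambda>(i,j). if N*m \<le> i then B $$ (i - N*m,j) else 0)"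
  proof -
    have "kron_mat (unit_col (m+1) (m+1)) B = mat (N*(m+1)) N (\<lambda>(i,j). if N*(m+1-1) \<le> i \<and> i < N*(m+1-1) + N then B $$ (i - N*(m+1-1), j) else 0)"
      by (rule kron_col_entry) (use N0 m dA dB dC dBH dCh in auto)
    also have "\<dots> = mat (N*m+N) N (\<lambda>(i,j). if N*m \<le> i then B $$ (i - N*m,j) else 0)"
      unfolding ar4 ar1 by (intro eq_matI) auto
    finally show ?thesis .
  qed
  have kc: "kron_mat (unit_col (m+1) 1) C = mat (N*m+N) N (\<lambda>(i,j). if i < N then C $$ (i,j) else 0)"
  proof -
    have "kron_mat (unit_col (m+1) 1) C = mat (N*(m+1)) N (\<lambda>(i,j). if N*(1-1) \<le> i \<and> i < N*(1-1) + N then C $$ (i - N*(1-1), j) else 0)"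
      by (rule kron_col_entry) (use N0 m dA dB dC dBH dCh in auto)
    also have "\<dots> = mat (N*m+N) N (\<lambda>(i,j). if i < N then C $$ (i,j) else 0)"
      unfolding ar4 ar1 by (intro eq_matI) auto
    finally show ?thesis .
  qed
  have kF2: "kron_mat (transpose_mat (unit_col (2*m+1) (m+2))) (1\<^sub>m N :: real mat) = mat N (N*m+N+N*m) (\<lambda>(i,j). if j = N*m+N+i then 1 else 0)"
  proof -
    have "kron_mat (transpose_mat (unit_col (2*m+1) (m+2))) (1\<^sub>m N :: real mat) = mat N (N*(2*m+1)) (\<lambda>(i,j). if N*(m+2-1) \<le> j \<and> j < N*(m+2-1) + N then (1\<^sub>m N :: real mat) $$ (i, j - N*(m+2-1)) else 0)"
      by (rule kron_row_entry) (use N0 m dA dB dC dBH dCh in auto)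
    also have "\<dots> = mat N (N*m+N+N*m) (\<lambda>(i,j). if j = N*m+N+i then 1 else 0)"
      unfolding ar4 ar1 ar2 by (intro eq_matI) auto
    finally show ?thesis .
  qed
  have kF1: "kron_mat (transpose_mat (unit_col (2*m+1) m)) (1\<^sub>m N :: real mat) = mat N (N*m+N+N*m) (\<lambda>(i,j). if j = N*(m-1)+i then 1 else 0)"
  proof -
    have "kron_mat (transpose_mat (unit_col (2*m+1) m)) (1\<^sub>m N :: real mat) = mat N (N*(2*m+1)) (\<lambda>(i,j). if N*(m-1) \<le> j \<and> j < N*(m-1) + N then (1\<^sub>m N :: real mat) $$ (i, j - N*(m-1)) else 0)"
      by (rule kron_row_entry) (use N0 m dA dB dC dBH dCh in auto)
    also have "\<dots> = mat N (N*m+N+N*m) (\<lambda>(i,j). if j = N*(m-1)+i then 1 else 0)"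
      unfolding ar2 by (intro eq_matI) auto
    finally show ?thesis .
  qed
  note calA_def = assms(10) and A1_def = assms(11) and A2_def = assms(12) and R1_def = assms(13)
    and R2_def = assms(14) and P1proj_def = assms(15) and P2proj_def = assms(16)
    and Q1_def = assms(17) and Q2_def = assms(18) and T12_def = assms(19) and T21_def = assms(20)
    and X1_def = assms(21) and X2_def = assms(22) and PP1_def = assms(23) and Pi1_def = assms(24)
    and Pi2_def = assms(25) and PP2_def = assms(26) and PP_def = assms(27) and V1_def = assms(28)
    and V2_def = assms(29)
  define F2 where "F2 = kron_mat (transpose_mat (unit_col (2*m+1) (m+2))) (1\<^sub>m N :: real mat)"
  define F1 where "F1 = kron_mat (transpose_mat (unit_col (2*m+1) m)) (1\<^sub>m N :: real mat)"
  have Ac: "A1 \<in> carrier_mat (N*m+N) (N*m+N)" "A2 \<in> carrier_mat (N*m+N) (N*m+N)"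
    unfolding A1_def A2_def kBH kC kB kCh using dAH dAh dA by auto
  have calAc: "calA \<in> carrier_mat (N*m+N+N*m) (N*m+N+N*m)"
    unfolding calA_def block3_mat_def append_cols_mat_def append_rows_def kBH kC kB kCh
    using dAH dAh dA by auto
  have R1L: "R1 = mat (N*m+N) (N*m+N+N*m) (\<lambda>(i,k). if k = i \<and> True then 1 else 0)"
    unfolding R1_def append_cols_mat_def ar1 by (intro eq_matI) auto
  have R1R: "R1 = mat (N*m+N) (N*m+N+N*m) (\<lambda>(k,j). if k = j \<and> j < N*m+N then 1 else 0)"
    unfolding R1_def append_cols_mat_def ar1 by (intro eq_matI) auto
  have R1T: "transpose_mat R1 = mat (N*m+N+N*m) (N*m+N) (\<lambda>(i,k). if k = i \<and> i < N*m+N then 1 else 0)"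
    unfolding R1_def append_cols_mat_def ar1 by (intro eq_matI) auto
  have R2L: "R2 = mat (N*m+N) (N*m+N+N*m) (\<lambda>(i,k). if k = i + N*m \<and> True then 1 else 0)"
    unfolding R2_def append_cols_mat_def ar1 by (intro eq_matI) auto
  have R2R: "R2 = mat (N*m+N) (N*m+N+N*m) (\<lambda>(k,j). if k = j - N*m \<and> N*m \<le> j then 1 else 0)"
    unfolding R2_def append_cols_mat_def ar1 by (intro eq_matI) auto
  have R2T: "transpose_mat R2 = mat (N*m+N+N*m) (N*m+N) (\<lambda>(i,k). if k = i - N*m \<and> N*m \<le> i then 1 else 0)"
    unfolding R2_def append_cols_mat_def ar1 by (intro eq_matI) auto
  have F2L: "F2 = mat N (N*m+N+N*m) (\<lambda>(i,k). if k = N*m+N+i \<and> True then 1 else 0)"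
    unfolding F2_def kF2 by simp
  have F2R: "F2 = mat N (N*m+N+N*m) (\<lambda>(k,j). if k = j - (N*m+N) \<and> N*m+N \<le> j then 1 else 0)"
    unfolding F2_def kF2 by (intro eq_matI) auto
  have F1L: "F1 = mat N (N*m+N+N*m) (\<lambda>(i,k). if k = N*(m-1)+i \<and> True then 1 else 0)"
    unfolding F1_def kF1 by simp
  have F1R: "F1 = mat N (N*m+N+N*m) (\<lambda>(k,j). if k = j - N*(m-1) \<and> N*(m-1) \<le> j then 1 else 0)"
    unfolding F1_def kF1 by (intro eq_matI) auto
  have F1c: "F1 \<in> carrier_mat N (N*m+N+N*m)" and F2c: "F2 \<in> carrier_mat N (N*m+N+N*m)"
    unfolding F1L F2L by auto
  have R1c: "R1 \<in> carrier_mat (N*m+N) (N*m+N+N*m)" and R2c: "R2 \<in> carrier_mat (N*m+N) (N*m+N+N*m)"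
    unfolding R1L R2L by auto
  have R1Tc: "transpose_mat R1 \<in> carrier_mat (N*m+N+N*m) (N*m+N)"
    and R2Tc: "transpose_mat R2 \<in> carrier_mat (N*m+N+N*m) (N*m+N)"
    using R1c R2c by auto
  have kbc: "kron_mat (unit_col (m+1) (m+1)) B \<in> carrier_mat (N*m+N) N"
    and kcc: "kron_mat (unit_col (m+1) 1) C \<in> carrier_mat (N*m+N) N"
    unfolding kb kc by auto
  have inv_ex: "\<exists>Ai. inv_mat M = Ai \<and> Ai \<in> carrier_mat n n \<and> M * Ai = 1\<^sub>m n \<and> Ai * M = 1\<^sub>m n"
    if Mc: "M \<in> carrier_mat n n" and Mi: "invertible_mat M" for M :: "real mat" and n
  proof -
    from Mi obtain B' where B': "inverts_mat M B'" "inverts_mat B' M"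
      unfolding invertible_mat_def by blast
    have "dim_col B' = n" using B'(1) Mc unfolding inverts_mat_def
      by (metis carrier_matD(1) index_mult_mat(3) index_one_mat(3))
    moreover have "dim_row B' = n" using B'(2) Mc unfolding inverts_mat_def
      by (metis carrier_matD(2) index_mult_mat(3) index_one_mat(3))
    ultimately have ex: "\<exists>B. B \<in> carrier_mat (dim_row M) (dim_row M) \<and> inverts_mat M B \<and> inverts_mat B M"
      using B' Mc by auto
    have "inv_mat M \<in> carrier_mat (dim_row M) (dim_row M) \<and> inverts_mat M (inv_mat M) \<and> inverts_mat (inv_mat M) M"
      unfolding inv_mat_def by (rule someI_ex[OF ex])
    then show ?thesis using Mc unfolding inverts_mat_def by auto
  qed
  obtain Ai1 where Ai1: "inv_mat A1 = Ai1" "Ai1 \<in> carrier_mat (N*m+N) (N*m+N)" "A1 * Ai1 = 1\<^sub>m (N*m+N)" "Ai1 * A1 = 1\<^sub>m (N*m+N)"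
    using inv_ex[OF Ac(1) inv1] by blast
  obtain Ai2 where Ai2: "inv_mat A2 = Ai2" "Ai2 \<in> carrier_mat (N*m+N) (N*m+N)" "A2 * Ai2 = 1\<^sub>m (N*m+N)" "Ai2 * A2 = 1\<^sub>m (N*m+N)"
    using inv_ex[OF Ac(2) inv2] by blast
  have E1: "R1 * calA = A1 * R1 + kron_mat (unit_col (m+1) (m+1)) B * F2"
  proof -
    have l: "R1 * calA = mat (N*m+N) (N*m+N+N*m) (\<lambda>(i,j). if True \<and> i < N*m+N+N*m then calA $$ (i,j) else 0)"
      unfolding R1L by (rule sel_left[OF calAc])
    have r1: "A1 * R1 = mat (N*m+N) (N*m+N+N*m) (\<lambda>(i,j). if j < N*m+N \<and> j < N*m+N then A1 $$ (i,j) else 0)"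
      unfolding R1R by (rule sel_right[OF Ac(1)])
    have r2: "kron_mat (unit_col (m+1) (m+1)) B * F2 = mat (N*m+N) (N*m+N+N*m) (\<lambda>(i,j). if N*m+N \<le> j \<and> j - (N*m+N) < N then kron_mat (unit_col (m+1) (m+1)) B $$ (i,j - (N*m+N)) else 0)"
      unfolding F2R by (rule sel_right[OF kbc])
    show ?thesis unfolding l r1 r2
      unfolding calA_def A1_def block3_mat_def append_cols_mat_def append_rows_def kBH kC kB kCh kb
      using dAH dAh dA dB dC dBH dCh by (intro eq_matI) auto
  qed
  have E2: "R2 * calA = A2 * R2 + kron_mat (unit_col (m+1) 1) C * F1"
  proof -
    have l: "R2 * calA = mat (N*m+N) (N*m+N+N*m) (\<lambda>(i,j). if True \<and> i + N*m < N*m+N+N*m then calA $$ (i + N*m,j) else 0)"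
      unfolding R2L by (rule sel_left[OF calAc])
    have r1: "A2 * R2 = mat (N*m+N) (N*m+N+N*m) (\<lambda>(i,j). if N*m \<le> j \<and> j - N*m < N*m+N then A2 $$ (i,j - N*m) else 0)"
      unfolding R2R by (rule sel_right[OF Ac(2)])
    have r2: "kron_mat (unit_col (m+1) 1) C * F1 = mat (N*m+N) (N*m+N+N*m) (\<lambda>(i,j). if N*(m-1) \<le> j \<and> j - N*(m-1) < N then kron_mat (unit_col (m+1) 1) C $$ (i,j - N*(m-1)) else 0)"
      unfolding F1R by (rule sel_right[OF kcc])
    show ?thesis unfolding l r1 r2
      unfolding calA_def A2_def block3_mat_def append_cols_mat_def append_rows_def kBH kC kB kCh kc
      using dAH dAh dA dB dC dBH dCh ar3 by (intro eq_matI) auto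
  qed
  define W1 where "W1 = transpose_mat R1 * X1"
  define W2 where "W2 = transpose_mat R2 * X2"
  have X1e: "X1 = Ai1 * kron_mat (unit_col (m+1) (m+1)) B" unfolding X1_def Ai1(1) ..
  have X2e: "X2 = Ai2 * kron_mat (unit_col (m+1) 1) C" unfolding X2_def Ai2(1) ..
  have X1c: "X1 \<in> carrier_mat (N*m+N) N" and X2c: "X2 \<in> carrier_mat (N*m+N) N"
    unfolding X1e X2e using Ai1(2) Ai2(2) kbc kcc by auto
  define D1 where "D1 = mat (N*m+N+N*m) (N*m+N+N*m) (\<lambda>(i,k). if k = i \<and> N*m+N \<le> i then (1::real) else 0)"
  define D2 where "D2 = mat (N*m+N+N*m) (N*m+N+N*m) (\<lambda>(i,k). if k = i \<and> i < N*m then (1::real) else 0)"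
  have D1c: "D1 \<in> carrier_mat (N*m+N+N*m) (N*m+N+N*m)" and D2c: "D2 \<in> carrier_mat (N*m+N+N*m) (N*m+N+N*m)"
    unfolding D1_def D2_def by auto
  have W1c: "W1 \<in> carrier_mat (N*m+N+N*m) N" and W2c: "W2 \<in> carrier_mat (N*m+N+N*m) N"
    unfolding W1_def W2_def using R1Tc R2Tc X1c X2c by auto
  have Q1e: "Q1 = D1 - W1 * F2"
  proof -
    have "P1proj = transpose_mat R1 * Ai1 * (R1 * calA)"
      unfolding P1proj_def Ai1(1) by (rule assoc_mult_mat[OF mult_carrier_mat[OF R1Tc Ai1(2)] R1c calAc])
    also have "\<dots> = transpose_mat R1 * Ai1 * (A1 * R1) + transpose_mat R1 * Ai1 * (kron_mat (unit_col (m+1) (m+1)) B * F2)"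
      unfolding E1 using R1Tc Ai1(2) R1c Ac kbc F2c by (intro mult_add_distrib_mat) auto
    also have "transpose_mat R1 * Ai1 * (A1 * R1) = transpose_mat R1 * ((Ai1 * A1) * R1)"
      using assoc_mult_mat[OF R1Tc Ai1(2) mult_carrier_mat[OF Ac(1) R1c]]
        assoc_mult_mat[OF Ai1(2) Ac(1) R1c] by simp
    also have "\<dots> = transpose_mat R1 * R1" unfolding Ai1(4) using R1c by simp
    also have "transpose_mat R1 * Ai1 * (kron_mat (unit_col (m+1) (m+1)) B * F2) = W1 * F2"
      unfolding W1_def X1e using assoc_mult_mat[OF R1Tc Ai1(2) mult_carrier_mat[OF kbc F2c]]
        assoc_mult_mat[OF Ai1(2) kbc F2c] assoc_mult_mat[OF R1Tc mult_carrier_mat[OF Ai1(2) kbc] F2c]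
        assoc_mult_mat[OF R1Tc Ai1(2) kbc] by simp
    finally have P: "P1proj = transpose_mat R1 * R1 + W1 * F2" .
    have RR: "transpose_mat R1 * R1 = mat (N*m+N+N*m) (N*m+N+N*m) (\<lambda>(i,j). if i < N*m+N \<and> i < N*m+N then R1 $$ (i,j) else 0)"
      unfolding R1T by (rule sel_left[OF R1c])
    show ?thesis unfolding Q1_def P RR D1_def ar2
      using W1c F2c R1c by (intro eq_matI) (auto simp: R1L)
  qed
  have Q2e: "Q2 = D2 - W2 * F1"
  proof -
    have "P2proj = transpose_mat R2 * Ai2 * (R2 * calA)"
      unfolding P2proj_def Ai2(1) by (rule assoc_mult_mat[OF mult_carrier_mat[OF R2Tc Ai2(2)] R2c calAc])
    also have "\<dots> = transpose_mat R2 * Ai2 * (A2 * R2) + transpose_mat R2 * Ai2 * (kron_mat (unit_col (m+1) 1) C * F1)"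
      unfolding E2 using R2Tc Ai2(2) R2c Ac kcc F1c by (intro mult_add_distrib_mat) auto
    also have "transpose_mat R2 * Ai2 * (A2 * R2) = transpose_mat R2 * ((Ai2 * A2) * R2)"
      using assoc_mult_mat[OF R2Tc Ai2(2) mult_carrier_mat[OF Ac(2) R2c]]
        assoc_mult_mat[OF Ai2(2) Ac(2) R2c] by simp
    also have "\<dots> = transpose_mat R2 * R2" unfolding Ai2(4) using R2c by simp
    also have "transpose_mat R2 * Ai2 * (kron_mat (unit_col (m+1) 1) C * F1) = W2 * F1"
      unfolding W2_def X2e using assoc_mult_mat[OF R2Tc Ai2(2) mult_carrier_mat[OF kcc F1c]]
        assoc_mult_mat[OF Ai2(2) kcc F1c] assoc_mult_mat[OF R2Tc mult_carrier_mat[OF Ai2(2) kcc] F1c]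
        assoc_mult_mat[OF R2Tc Ai2(2) kcc] by simp
    finally have P: "P2proj = transpose_mat R2 * R2 + W2 * F1" .
    have RR: "transpose_mat R2 * R2 = mat (N*m+N+N*m) (N*m+N+N*m) (\<lambda>(i,j). if N*m \<le> i \<and> i - N*m < N*m+N then R2 $$ (i - N*m,j) else 0)"
      unfolding R2T by (rule sel_left[OF R2c])
    show ?thesis unfolding Q2_def P RR D2_def ar2
      using W2c F1c R2c by (intro eq_matI) (auto simp: R2L)
  qed
  have W1e: "W1 = mat (N*m+N+N*m) N (\<lambda>(i,j). if i < N*m+N \<and> i < N*m+N then X1 $$ (i,j) else 0)"
    unfolding W1_def R1T by (rule sel_left[OF X1c])
  have W2e: "W2 = mat (N*m+N+N*m) N (\<lambda>(i,j). if N*m \<le> i \<and> i - N*m < N*m+N then X2 $$ (i - N*m,j) else 0)"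
    unfolding W2_def R2T by (rule sel_left[OF X2c])
  have PP1m: "PP 1 m = mat N N (\<lambda>(i,j). X1 $$ (i + N*(m-1), j))"
    unfolding PP_def PP1_def sub_block_def using ar3 by (intro eq_matI) auto
  have NNm: "N \<le> N*m" using m by simp
  have iNm: "\<And>i. i < N \<Longrightarrow> i < N*m" using NNm by linarith
  have PP21: "PP 2 1 = mat N N (\<lambda>(i,j). X2 $$ (i + N, j))"
    unfolding PP_def PP2_def sub_block_def by (intro eq_matI) (auto simp: iNm)
  have PP1e: "PP1 = mat (N*m) N (\<lambda>(i,j). X1 $$ (i, j))" unfolding PP1_def sub_block_def by simp
  have PP2e: "PP2 = mat (N*m) N (\<lambda>(i,j). X2 $$ (i + N, j))" unfolding PP2_def sub_block_def by simp
  have Pi1e: "Pi1 = mat N N (\<lambda>(i,j). X1 $$ (i + N*m, j))" unfolding Pi1_def sub_block_def by simp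
  have Pi2e: "Pi2 = mat N N (\<lambda>(i,j). X2 $$ (i, j))" unfolding Pi2_def sub_block_def by simp
  have PPc: "PP 1 m \<in> carrier_mat N N" "PP 2 1 \<in> carrier_mat N N" unfolding PP1m PP21 by auto
  have F1D1: "F1 * D1 = 0\<^sub>m N (N*m+N+N*m)"
  proof -
    have "F1 * D1 = mat N (N*m+N+N*m) (\<lambda>(i,j). if True \<and> N*(m-1)+i < N*m+N+N*m then D1 $$ (N*(m-1)+i, j) else 0)"
      unfolding F1L by (rule sel_left[OF D1c])
    then show ?thesis unfolding D1_def using ar3 by (intro eq_matI) auto
  qed
  have F2D2: "F2 * D2 = 0\<^sub>m N (N*m+N+N*m)"
  proof -
    have "F2 * D2 = mat N (N*m+N+N*m) (\<lambda>(i,j). if True \<and> N*m+N+i < N*m+N+N*m then D2 $$ (N*m+N+i, j) else 0)"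
      unfolding F2L by (rule sel_left[OF D2c])
    then show ?thesis unfolding D2_def by (intro eq_matI) auto
  qed
  have D2D1: "D2 * D1 = 0\<^sub>m (N*m+N+N*m) (N*m+N+N*m)"
  proof -
    have "D2 * D1 = mat (N*m+N+N*m) (N*m+N+N*m) (\<lambda>(i,j). if i < N*m \<and> i < N*m+N+N*m then D1 $$ (i, j) else 0)"
      unfolding D2_def[of] by (rule sel_left[OF D1c])
    then show ?thesis unfolding D1_def by (intro eq_matI) auto
  qed
  have D1D2: "D1 * D2 = 0\<^sub>m (N*m+N+N*m) (N*m+N+N*m)"
  proof -
    have "D1 * D2 = mat (N*m+N+N*m) (N*m+N+N*m) (\<lambda>(i,j). if N*m+N \<le> i \<and> i < N*m+N+N*m then D2 $$ (i, j) else 0)"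
      unfolding D1_def[of] by (rule sel_left[OF D2c])
    then show ?thesis unfolding D2_def by (intro eq_matI) auto
  qed
  have F1W1: "F1 * W1 = PP 1 m"
  proof -
    have "F1 * W1 = mat N N (\<lambda>(i,j). if True \<and> N*(m-1)+i < N*m+N+N*m then W1 $$ (N*(m-1)+i, j) else 0)"
      unfolding F1L by (rule sel_left[OF W1c])
    then show ?thesis unfolding W1e PP1m using ar3 by (intro eq_matI) (auto simp: add.commute)
  qed
  have F2W2: "F2 * W2 = PP 2 1"
  proof -
    have "F2 * W2 = mat N N (\<lambda>(i,j). if True \<and> N*m+N+i < N*m+N+N*m then W2 $$ (N*m+N+i, j) else 0)"
      unfolding F2L by (rule sel_left[OF W2c])
    then show ?thesis unfolding W2e PP21 by (intro eq_matI) (auto simp: add.commute iNm)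
  qed
  define Z1 where "Z1 = mat (N*m+N+N*m) N (\<lambda>(i,j). if i < N*m then X1 $$ (i,j) else 0)"
  define Z2 where "Z2 = mat (N*m+N+N*m) N (\<lambda>(i,j). if N*m+N \<le> i then X2 $$ (i - N*m,j) else 0)"
  have Z1c: "Z1 \<in> carrier_mat (N*m+N+N*m) N" and Z2c: "Z2 \<in> carrier_mat (N*m+N+N*m) N"
    unfolding Z1_def Z2_def by auto
  have D2W1: "D2 * W1 = Z1"
  proof -
    have "D2 * W1 = mat (N*m+N+N*m) N (\<lambda>(i,j). if i < N*m \<and> i < N*m+N+N*m then W1 $$ (i, j) else 0)"
      unfolding D2_def[of] by (rule sel_left[OF W1c])
    then show ?thesis unfolding W1e Z1_def by (intro eq_matI) auto
  qed
  have D1W2: "D1 * W2 = Z2"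
  proof -
    have "D1 * W2 = mat (N*m+N+N*m) N (\<lambda>(i,j). if N*m+N \<le> i \<and> i < N*m+N+N*m then W2 $$ (i, j) else 0)"
      unfolding D1_def[of] by (rule sel_left[OF W2c])
    then show ?thesis unfolding W2e Z2_def by (intro eq_matI) auto
  qed
  define P1 where "P1 = PP 1 m"
  define P2 where "P2 = PP 2 1"
  have P1c: "P1 \<in> carrier_mat N N" and P2c: "P2 \<in> carrier_mat N N" unfolding P1_def P2_def using PPc by auto
  have W2P: "W2 * P1 = mat (N*m+N+N*m) N (\<lambda>(i,j). if N*m \<le> i then (X2 * P1) $$ (i - N*m, j) else 0)"
  proof -
    have "W2 = mat (N*m+N+N*m) N (\<lambda>(i,k). if N*m \<le> i then X2 $$ (i - N*m, k) else 0)"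
      unfolding W2e by (intro eq_matI) auto
    then show ?thesis by (simp add: rowsel_mult[OF X2c P1c])
  qed
  have W1P: "W1 * P2 = mat (N*m+N+N*m) N (\<lambda>(i,j). if i < N*m+N then (X1 * P2) $$ (i, j) else 0)"
  proof -
    have "W1 = mat (N*m+N+N*m) N (\<lambda>(i,k). if i < N*m+N then X1 $$ (i, k) else 0)"
      unfolding W1e by (intro eq_matI) auto
    then show ?thesis by (simp add: rowsel_mult[OF X1c P2c])
  qed
  have Pi2P: "Pi2 * P1 = mat N N (\<lambda>(i,j). if True then (X2 * P1) $$ (i, j) else 0)"
    unfolding Pi2e using rowsel_mult[OF X2c P1c, of N "\<lambda>_. True" "\<lambda>i. i"] by simp
  have PP2P: "PP2 * P1 = mat (N*m) N (\<lambda>(i,j). if True then (X2 * P1) $$ (i + N, j) else 0)"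
    unfolding PP2e using rowsel_mult[OF X2c P1c, of "N*m" "\<lambda>_. True" "\<lambda>i. i + N"] by simp
  have PP1P: "PP1 * P2 = mat (N*m) N (\<lambda>(i,j). if True then (X1 * P2) $$ (i, j) else 0)"
    unfolding PP1e using rowsel_mult[OF X1c P2c, of "N*m" "\<lambda>_. True" "\<lambda>i. i"] by simp
  have Pi1P: "Pi1 * P2 = mat N N (\<lambda>(i,j). if True then (X1 * P2) $$ (i + N*m, j) else 0)"
    unfolding Pi1e using rowsel_mult[OF X1c P2c, of N "\<lambda>_. True" "\<lambda>i. i + N*m"] by simp
  have P21P: "P2 * P1 = mat N N (\<lambda>(i,j). if True then (X2 * P1) $$ (i + N, j) else 0)"
    unfolding P2_def PP21 using rowsel_mult[OF X2c P1c, of N "\<lambda>_. True" "\<lambda>i. i + N"] by (simp add: iNm)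
  have P12P: "P1 * P2 = mat N N (\<lambda>(i,j). if True then (X1 * P2) $$ (i + N*(m-1), j) else 0)"
    unfolding P1_def PP1m using rowsel_mult[OF X1c P2c, of N "\<lambda>_. True" "\<lambda>i. i + N*(m-1)"] ar3 by (simp add: iNm)
  have V1e: "V1 = W2 * P1 - Z1"
  proof (rule eq_matI)
    fix i j assume i: "i < dim_row (W2 * P1 - Z1)" and j: "j < dim_col (W2 * P1 - Z1)"
    have e: "N*m+N \<le> i \<Longrightarrow> i - (N*m+N) + N = i - N*m" by simp
    show "V1 $$ (i,j) = (W2 * P1 - Z1) $$ (i,j)"
      using i j e unfolding V1_def append_rows_def W2P Z1_def Pi2P PP2P P1_def[symmetric] PP1e
      by (auto simp: P1c)
  qed (auto simp: V1_def append_rows_def W2P Z1_def Pi2P PP2P P1_def[symmetric] PP1e Pi2e PP2e)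
  have PP21': "dim_col (PP 2 (Suc 0)) = N" "dim_row (PP 2 (Suc 0)) = N" using PPc(2) by auto
  have V2e: "V2 = W1 * P2 - Z2"
  proof (rule eq_matI)
    fix i j assume i: "i < dim_row (W1 * P2 - Z2)" and j: "j < dim_col (W1 * P2 - Z2)"
    have e: "N*m+N \<le> i \<Longrightarrow> i - (N*m+N) + N = i - N*m" by simp
    show "V2 $$ (i,j) = (W1 * P2 - Z2) $$ (i,j)"
      using i j e unfolding V2_def append_rows_def W1P Z2_def Pi1P PP1P P2_def[symmetric] PP2e
      by (auto simp: P2c)
  qed (auto simp: V2_def append_rows_def W1P Z2_def Pi1P PP1P P2_def[symmetric] PP2e Pi1e PP1e P2c PP21')
  have V1c: "V1 \<in> carrier_mat (N*m+N+N*m) N" unfolding V1e using W2c P1c Z1c by auto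
  have V2c: "V2 \<in> carrier_mat (N*m+N+N*m) N" unfolding V2e using W1c P2c Z2c by auto
  have F2V1: "F2 * V1 = P2 * P1"
  proof -
    have "F2 * V1 = mat N N (\<lambda>(i,j). if True \<and> N*m+N+i < N*m+N+N*m then V1 $$ (N*m+N+i, j) else 0)"
      unfolding F2L by (rule sel_left[OF V1c])
    also have "\<dots> = P2 * P1"
      unfolding P21P V1_def append_rows_def PP2P P1_def[symmetric] PP1e Pi2P
      by (intro eq_matI) (auto simp: P1c iNm)
    finally show ?thesis .
  qed
  have F1V2: "F1 * V2 = P1 * P2"
  proof -
    have "F1 * V2 = mat N N (\<lambda>(i,j). if True \<and> N*(m-1)+i < N*m+N+N*m then V2 $$ (N*(m-1)+i, j) else 0)"
      unfolding F1L by (rule sel_left[OF V2c])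
    also have "\<dots> = P1 * P2"
      unfolding P12P V2_def append_rows_def PP1P P2_def[symmetric] Pi1P PP2e
      using ar3 by (intro eq_matI) (auto simp: P2c add.commute)
    finally show ?thesis .
  qed
  have W2F1c: "W2 * F1 \<in> carrier_mat (N*m+N+N*m) (N*m+N+N*m)" using W2c F1c by auto
  have W1F2c: "W1 * F2 \<in> carrier_mat (N*m+N+N*m) (N*m+N+N*m)" using W1c F2c by auto
  have Q1c: "Q1 \<in> carrier_mat (N*m+N+N*m) (N*m+N+N*m)" unfolding Q1e using minus_carrier_mat[OF W1F2c] D1c by auto
  have Q2c: "Q2 \<in> carrier_mat (N*m+N+N*m) (N*m+N+N*m)" unfolding Q2e using minus_carrier_mat[OF W2F1c] D2c by auto
  have T12e: "T12 = V1 * F2"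
  proof -
    have a: "Q2 * D1 = 0\<^sub>m (N*m+N+N*m) (N*m+N+N*m)"
    proof -
      have "Q2 * D1 = D2 * D1 - W2 * F1 * D1" unfolding Q2e by (rule minus_mult_distrib_mat[OF D2c W2F1c D1c])
      also have "W2 * F1 * D1 = W2 * (F1 * D1)" by (rule assoc_mult_mat[OF W2c F1c D1c])
      finally show ?thesis unfolding D2D1 F1D1 using W2c by (intro eq_matI) auto
    qed
    have b: "Q2 * W1 = Z1 - W2 * P1"
    proof -
      have "Q2 * W1 = D2 * W1 - W2 * F1 * W1" unfolding Q2e by (rule minus_mult_distrib_mat[OF D2c W2F1c W1c])
      also have "W2 * F1 * W1 = W2 * (F1 * W1)" by (rule assoc_mult_mat[OF W2c F1c W1c])
      finally show ?thesis unfolding D2W1 F1W1 P1_def .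
    qed
    have "T12 = Q2 * D1 - Q2 * (W1 * F2)" unfolding T12_def Q1e
      by (rule mult_minus_distrib_mat[OF Q2c D1c W1F2c])
    also have "Q2 * (W1 * F2) = Q2 * W1 * F2" using assoc_mult_mat[OF Q2c W1c F2c] by simp
    also have "\<dots> = Z1 * F2 - W2 * P1 * F2" unfolding b
      by (rule minus_mult_distrib_mat[OF Z1c mult_carrier_mat[OF W2c P1c] F2c])
    also have "V1 * F2 = W2 * P1 * F2 - Z1 * F2" unfolding V1e
      by (rule minus_mult_distrib_mat[OF mult_carrier_mat[OF W2c P1c] Z1c F2c])
    ultimately show ?thesis unfolding a using Z1c W2c P1c F2c by (intro eq_matI) auto
  qed
  have T21e: "T21 = V2 * F1"
  proof -
    have a: "Q1 * D2 = 0\<^sub>m (N*m+N+N*m) (N*m+N+N*m)"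
    proof -
      have "Q1 * D2 = D1 * D2 - W1 * F2 * D2" unfolding Q1e by (rule minus_mult_distrib_mat[OF D1c W1F2c D2c])
      also have "W1 * F2 * D2 = W1 * (F2 * D2)" by (rule assoc_mult_mat[OF W1c F2c D2c])
      finally show ?thesis unfolding D1D2 F2D2 using W1c by (intro eq_matI) auto
    qed
    have b: "Q1 * W2 = Z2 - W1 * P2"
    proof -
      have "Q1 * W2 = D1 * W2 - W1 * F2 * W2" unfolding Q1e by (rule minus_mult_distrib_mat[OF D1c W1F2c W2c])
      also have "W1 * F2 * W2 = W1 * (F2 * W2)" by (rule assoc_mult_mat[OF W1c F2c W2c])
      finally show ?thesis unfolding D1W2 F2W2 P2_def .
    qed
    have "T21 = Q1 * D2 - Q1 * (W2 * F1)" unfolding T21_def Q2e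
      by (rule mult_minus_distrib_mat[OF Q1c D2c W2F1c])
    also have "Q1 * (W2 * F1) = Q1 * W2 * F1" using assoc_mult_mat[OF Q1c W2c F1c] by simp
    also have "\<dots> = Z2 * F1 - W1 * P2 * F1" unfolding b
      by (rule minus_mult_distrib_mat[OF Z2c mult_carrier_mat[OF W1c P2c] F1c])
    also have "V2 * F1 = W1 * P2 * F1 - Z2 * F1" unfolding V2e
      by (rule minus_mult_distrib_mat[OF mult_carrier_mat[OF W1c P2c] Z2c F1c])
    ultimately show ?thesis unfolding a using Z2c W1c P2c F1c by (intro eq_matI) auto
  qed
  show ?thesis
    unfolding F2_def[symmetric] F1_def[symmetric] P1_def[symmetric] P2_def[symmetric]
    unfolding T12e T21e F2V1[symmetric] F1V2[symmetric]
    using rank_prod_le[OF V1c F2c] rank_prod_le[OF V2c F1c]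
      pow_VF[OF V1c F2c] pow_VF[OF V2c F1c] by simp
qed

end
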